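(* Let $E\subset\mathbb{R}^2$ be $\mathcal H^1$ measurable with $\mathcal H^1(E)<\infty$, let $\alpha>0$, $r_0>0$, and let $F\subset E$ be a set with $d(F)<r_0/3$ such that (i) $\mathcal H^1(E\cap U(x,r))>(\tfrac34+\alpha)\,2r$ for all $x\in F$ and $0<r<r_0$, and (ii) $\mathcal H^1(E\cap B)\le(1+\alpha)\,d(B)$ for every set $B\subset\mathbb{R}^2$ with $F\cap B\neq\emptyset$ and $d(B)<r_0$. Then for all $x,y\in F$ with $x\neq y$, $$\mathcal H^1\big(E\cap U(x,y)\big)>\alpha|x-y|,$$ where $U(x,y)=U(x,|x-y|)\cap U(y,|x-y|)$.
   Context: $\mathcal H^1$ is the one-dimensional Hausdorff measure on $\mathbb{R}^2$, normalized so that $\mathcal H^1(A)=\lim_{\delta\to0}\inf\{\sum_i d(E_i): A\subset\bigcup_i E_i,\ d(E_i)<\delta\}$. $d(A)$ denotes the diameter of $A$; $U(z,r)$ is the open disc of centre $z$ and radius $r$. *)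

theory Defs
  imports "HOL-Analysis.Analysis"
begin

definition hcontent1 :: "real \<Rightarrow> (real^2) set \<Rightarrow> ennreal" where
  "hcontent1 \<delta> A = (INF C \<in> {C :: nat \<Rightarrow> (real^2) set.
       A \<subseteq> (\<Union>i. C i) \<and> (\<forall>i. bounded (C i) \<and> diameter (C i) < \<delta>)}.
       (\<Sum>i. ennreal (diameter (C i))))"

text \<open>One-dimensional Hausdorff (outer) measure: the limit as delta tends to 0,
  which equals the supremum since the content is antitone in delta.\<close>
definition H1 :: "(real^2) set \<Rightarrow> ennreal" where
  "H1 A = (SUP \<delta> \<in> {0<..}. hcontent1 \<delta> A)"

definition H1_measurable :: "(real^2) set \<Rightarrow> bool" where
  "H1_measurable E \<longleftrightarrow> (\<forall>A. H1 A = H1 (A \<inter> E) + H1 (A - E))"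

end

theory Submission imports Defs begin

lemma hc_mono: "A \<subseteq> B \<Longrightarrow> hcontent1 \<delta> A \<le> hcontent1 \<delta> B"
  unfolding hcontent1_def by (rule INF_superset_mono) auto

lemma hc_anti: "\<delta>1 \<le> \<delta>2 \<Longrightarrow> hcontent1 \<delta>2 A \<le> hcontent1 \<delta>1 A"
  unfolding hcontent1_def by (rule INF_superset_mono) (auto intro: less_le_trans)

lemma H1_mono: "A \<subseteq> B \<Longrightarrow> H1 A \<le> H1 B"
  unfolding H1_def by (rule SUP_mono) (use hc_mono in blast)

lemma ennreal_interleave:
  fixes C D :: "nat \<Rightarrow> ennreal"
  shows "(\<Sum>n. (if even n then C (n div 2) else D (n div 2))) = (\<Sum>n. C n) + (\<Sum>n. D n)"
proof -
  let ?K = "\<lambda>n. (if even n then C (n div 2) else D (n div 2))"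
  have "?K sums (\<Sum>n. ?K n)" by (simp add: summable_sums summableI)
  from sums_group[OF this, of 2]
  have "(\<lambda>n. sum ?K {n*2..<n*2+2}) sums (\<Sum>n. ?K n)" by simp
  moreover have "(\<lambda>n. sum ?K {n*2..<n*2+2}) = (\<lambda>n. C n + D n)"
  proof
    fix n :: nat
    have "{n*2..<n*2+2} = {2*n, 2*n+1}" by auto
    moreover have "(2*n+1) div 2 = n" by presburger
    ultimately show "sum ?K {n*2..<n*2+2} = C n + D n" by simp
  qed
  ultimately have "(\<lambda>n. C n + D n) sums (\<Sum>n. ?K n)" by simp
  hence "(\<Sum>n. ?K n) = (\<Sum>n. C n + D n)" by (simp add: sums_iff)
  also have "\<dots> = (\<Sum>n. C n) + (\<Sum>n. D n)"
    by (rule suminf_add[symmetric]) (auto intro: summableI)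
  finally show ?thesis .
qed


lemma ennreal_less_add_pos: "(x::ennreal) < top \<Longrightarrow> 0 < e \<Longrightarrow> x < x + ennreal e"
  by (cases x) (auto simp: ennreal_plus[symmetric] intro!: ennreal_lessI simp del: ennreal_plus)

lemma hc_subadd: "hcontent1 \<delta> (A \<union> B) \<le> hcontent1 \<delta> A + hcontent1 \<delta> B"
proof (rule ennreal_le_epsilon)
  fix e :: real assume fin: "hcontent1 \<delta> A + hcontent1 \<delta> B < top" and e: "0 < e"
  have fA: "hcontent1 \<delta> A < top" and fB: "hcontent1 \<delta> B < top" using fin by auto
  have "hcontent1 \<delta> A < hcontent1 \<delta> A + ennreal (e/2)"
    using ennreal_less_add_pos[OF fA] e by simp
  then obtain C where C: "A \<subseteq> (\<Union>i. C i)" "\<forall>i. bounded (C i) \<and> diameter (C i) < \<delta>"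
    and sC: "(\<Sum>i. ennreal (diameter (C i))) < hcontent1 \<delta> A + ennreal (e/2)"
    unfolding hcontent1_def INF_less_iff by blast
  have "hcontent1 \<delta> B < hcontent1 \<delta> B + ennreal (e/2)"
    using ennreal_less_add_pos[OF fB] e by simp
  then obtain D where D: "B \<subseteq> (\<Union>i. D i)" "\<forall>i. bounded (D i) \<and> diameter (D i) < \<delta>"
    and sD: "(\<Sum>i. ennreal (diameter (D i))) < hcontent1 \<delta> B + ennreal (e/2)"
    unfolding hcontent1_def INF_less_iff by blast
  define K where "K n = (if even n then C (n div 2) else D (n div 2))" for n
  have Kc: "A \<union> B \<subseteq> (\<Union>i. K i)"
  proof
    fix z assume "z \<in> A \<union> B"
    then show "z \<in> (\<Union>i. K i)"
    proof
      assume "z \<in> A" then obtain i where "z \<in> C i" using C by blast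
      hence "z \<in> K (2*i)" by (simp add: K_def)
      thus ?thesis by blast
    next
      assume "z \<in> B" then obtain i where "z \<in> D i" using D by blast
      moreover have "(2*i+1) div 2 = i" by presburger
      ultimately have "z \<in> K (2*i+1)" by (simp add: K_def)
      thus ?thesis by blast
    qed
  qed
  have Kb: "\<forall>i. bounded (K i) \<and> diameter (K i) < \<delta>" using C D by (simp add: K_def)
  have "hcontent1 \<delta> (A \<union> B) \<le> (\<Sum>i. ennreal (diameter (K i)))"
    unfolding hcontent1_def by (rule INF_lower) (use Kc Kb in blast)
  also have "(\<Sum>i. ennreal (diameter (K i))) = (\<Sum>i. ennreal (diameter (C i))) + (\<Sum>i. ennreal (diameter (D i)))"
    using ennreal_interleave[of "\<lambda>i. ennreal (diameter (C i))" "\<lambda>i. ennreal (diameter (D i))"]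
    unfolding K_def by (simp add: if_distrib)
  also have "\<dots> \<le> (hcontent1 \<delta> A + ennreal (e/2)) + (hcontent1 \<delta> B + ennreal (e/2))"
    using sC sD by (intro add_mono) auto
  also have "\<dots> = hcontent1 \<delta> A + hcontent1 \<delta> B + ennreal e"
    using e by (simp add: ennreal_plus[symmetric] add_ac del: ennreal_plus)
  finally show "hcontent1 \<delta> (A \<union> B) \<le> hcontent1 \<delta> A + hcontent1 \<delta> B + ennreal e" .
qed

lemma hc_sep:
  assumes sep: "\<And>a b. a \<in> A \<Longrightarrow> b \<in> B \<Longrightarrow> \<eta> \<le> dist a b" and "0 < \<delta>" "\<delta> \<le> \<eta>"
  shows "hcontent1 \<delta> A + hcontent1 \<delta> B \<le> hcontent1 \<delta> (A \<union> B)"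
  unfolding hcontent1_def[of _ "A \<union> B"]
proof (rule INF_greatest, clarify)
  fix C :: "nat \<Rightarrow> (real^2) set" assume Cc: "A \<union> B \<subseteq> (\<Union>i. C i)" and Cb: "\<forall>i. bounded (C i) \<and> diameter (C i) < \<delta>"
  define CA where "CA i = (if C i \<inter> B = {} then C i else {})" for i
  define CB where "CB i = (if C i \<inter> B = {} then {} else C i)" for i
  have "A \<subseteq> (\<Union>i. CA i)"
  proof
    fix a assume a: "a \<in> A"
    then obtain i where i: "a \<in> C i" using Cc by blast
    have "C i \<inter> B = {}"
    proof (rule ccontr)
      assume "C i \<inter> B \<noteq> {}"
      then obtain b where b: "b \<in> C i" "b \<in> B" by blast
      have "dist a b \<le> diameter (C i)" using Cb i b diameter_bounded_bound by blast
      moreover have "\<eta> \<le> dist a b" using sep a b by blast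
      ultimately show False using Cb assms by (meson leD less_le_trans order.trans)
    qed
    thus "a \<in> (\<Union>i. CA i)" using i by (auto simp: CA_def)
  qed
  moreover have "\<forall>i. bounded (CA i) \<and> diameter (CA i) < \<delta>" using Cb assms by (simp add: CA_def)
  ultimately have 1: "hcontent1 \<delta> A \<le> (\<Sum>i. ennreal (diameter (CA i)))"
    unfolding hcontent1_def by (intro INF_lower) blast
  have "B \<subseteq> (\<Union>i. CB i)" using Cc by (force simp: CB_def)
  moreover have "\<forall>i. bounded (CB i) \<and> diameter (CB i) < \<delta>" using Cb assms by (simp add: CB_def)
  ultimately have 2: "hcontent1 \<delta> B \<le> (\<Sum>i. ennreal (diameter (CB i)))"
    unfolding hcontent1_def by (intro INF_lower) blast
  have "(\<Sum>i. ennreal (diameter (CA i))) + (\<Sum>i. ennreal (diameter (CB i)))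
        = (\<Sum>i. ennreal (diameter (CA i)) + ennreal (diameter (CB i)))"
    by (rule suminf_add) (auto intro: summableI)
  also have "\<dots> = (\<Sum>i. ennreal (diameter (C i)))"
    by (rule suminf_cong) (simp add: CA_def CB_def)
  finally show "hcontent1 \<delta> A + hcontent1 \<delta> B \<le> (\<Sum>i. ennreal (diameter (C i)))"
    using 1 2 by (metis add_mono)
qed

lemma H1_subadd: "H1 (A \<union> B) \<le> H1 A + H1 B"
  unfolding H1_def
proof (rule SUP_least)
  fix d :: real assume "d \<in> {0<..}"
  hence "hcontent1 d A + hcontent1 d B \<le> (SUP \<delta>\<in>{0<..}. hcontent1 \<delta> A) + (SUP \<delta>\<in>{0<..}. hcontent1 \<delta> B)"
    by (intro add_mono SUP_upper)
  thus "hcontent1 d (A \<union> B) \<le> (SUP \<delta>\<in>{0<..}. hcontent1 \<delta> A) + (SUP \<delta>\<in>{0<..}. hcontent1 \<delta> B)"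
    using hc_subadd order.trans by blast
qed

lemma H1_sep:
  assumes sep: "\<And>a b. a \<in> A \<Longrightarrow> b \<in> B \<Longrightarrow> \<eta> \<le> dist a b" and "0 < \<eta>"
  shows "H1 A + H1 B \<le> H1 (A \<union> B)"
proof -
  have key: "hcontent1 d1 A + hcontent1 d2 B \<le> H1 (A \<union> B)" if "0 < d1" "0 < d2" for d1 d2
  proof -
    define m where "m = min d1 (min d2 \<eta>)"
    have m: "0 < m" "m \<le> d1" "m \<le> d2" "m \<le> \<eta>" using that assms by (auto simp: m_def)
    have "hcontent1 d1 A + hcontent1 d2 B \<le> hcontent1 m A + hcontent1 m B"
      using m by (intro add_mono hc_anti)
    also have "\<dots> \<le> hcontent1 m (A \<union> B)" using hc_sep[OF sep m(1) m(4)] by blast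
    also have "\<dots> \<le> H1 (A \<union> B)" unfolding H1_def using m by (intro SUP_upper) auto
    finally show ?thesis .
  qed
  have "H1 A + H1 B = (SUP d1\<in>{0<..}. hcontent1 d1 A + H1 B)"
    unfolding H1_def[of A] by (rule ennreal_SUP_add_left[symmetric]) auto
  also have "\<dots> \<le> H1 (A \<union> B)"
  proof (rule SUP_least)
    fix d1 :: real assume d1: "d1 \<in> {0<..}"
    have "hcontent1 d1 A + H1 B = (SUP d2\<in>{0<..}. hcontent1 d2 B + hcontent1 d1 A)"
      unfolding H1_def[of B] by (subst ennreal_SUP_add_left) (auto simp: add_ac)
    also have "\<dots> \<le> H1 (A \<union> B)"
      using key d1 by (intro SUP_least) (metis add.commute greaterThan_iff)
    finally show "hcontent1 d1 A + H1 B \<le> H1 (A \<union> B)" .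
  qed
  finally show ?thesis .
qed


lemma fin_real: "(v::ennreal) < top \<Longrightarrow> \<exists>r\<ge>0. v = ennreal r"
  by (cases v) auto

theorem mainTheorem2:
  fixes E F :: "(real^2) set" and \<alpha> r\<^sub>0 :: real
  assumes "H1_measurable E" and "H1 E < \<infinity>"
    and "\<alpha> > 0" and "r\<^sub>0 > 0"
    and "F \<subseteq> E" and "bounded F" and "diameter F < r\<^sub>0 / 3"
    and "\<And>x r. x \<in> F \<Longrightarrow> 0 < r \<Longrightarrow> r < r\<^sub>0 \<Longrightarrow>
           H1 (E \<inter> ball x r) > ennreal ((3/4 + \<alpha>) * (2 * r))"
    and "\<And>B. F \<inter> B \<noteq> {} \<Longrightarrow> bounded B \<Longrightarrow> diameter B < r\<^sub>0 \<Longrightarrow>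
           H1 (E \<inter> B) \<le> ennreal ((1 + \<alpha>) * diameter B)"
  shows "\<forall>x\<in>F. \<forall>y\<in>F. x \<noteq> y \<longrightarrow>
           H1 (E \<inter> (ball x (dist x y) \<inter> ball y (dist x y))) > ennreal (\<alpha> * dist x y)"
proof (intro ballI impI)
  fix x y assume xF: "x \<in> F" and yF: "y \<in> F" and xy: "x \<noteq> y"
  define d where "d = dist x y"
  have d0: "0 < d" using xy by (simp add: d_def)
  have "d \<le> diameter F" unfolding d_def using diameter_bounded_bound[OF assms(6) xF yF] .
  hence d3: "3 * d < r\<^sub>0" using assms(7) by linarith
  define k where "k = (3/4 + \<alpha>) * 2"
  have k0: "0 < k" using assms(3) by (simp add: k_def)
  have fin: "\<And>S. S \<subseteq> E \<Longrightarrow> \<exists>r\<ge>0. H1 S = ennreal r"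
    using assms(2) H1_mono fin_real by (metis infinity_ennreal_def le_less_trans)
  obtain bv where bv0: "bv \<ge> 0" and bv: "H1 (E \<inter> ball y d) = ennreal bv" using fin by blast
  have "ennreal (k * d) < ennreal bv"
  proof -
    have eq: "k * d = (3/4 + \<alpha>) * (2 * d)" by (simp add: k_def)
    have "ennreal ((3/4 + \<alpha>) * (2 * d)) < H1 (E \<inter> ball y d)" using assms(8)[OF yF d0] d3 d0 by simp
    thus ?thesis using eq bv by metis
  qed
  hence kbv: "k * d < bv" by (meson ennreal_leI leD not_less)
  define \<eta> where "\<eta> = min (d/2) ((bv - k*d)/(2*k))"
  have \<eta>0: "0 < \<eta>" using d0 kbv k0 by (simp add: \<eta>_def)
  have \<eta>d: "\<eta> < d" using d0 by (simp add: \<eta>_def)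
  have k\<eta>: "k * \<eta> < bv - k*d"
  proof -
    have "\<eta> \<le> (bv - k*d)/(2*k)" by (simp add: \<eta>_def)
    hence "k * \<eta> \<le> k * ((bv - k*d)/(2*k))" using k0 by (intro mult_left_mono) auto
    also have "\<dots> = (bv - k*d)/2" using k0 by simp
    also have "\<dots> < bv - k*d" using kbv by (simp add: mult.commute)
    finally show ?thesis .
  qed
  define A where "A = E \<inter> ball x (d - \<eta>)"
  define Bs where "Bs = E \<inter> (ball y d - ball x d)"
  define I where "I = E \<inter> (ball x d \<inter> ball y d)"
  obtain av where av0: "av \<ge> 0" and av: "H1 A = ennreal av" using fin[of A] by (auto simp: A_def)
  obtain bs where bs0: "bs \<ge> 0" and bs: "H1 Bs = ennreal bs" using fin[of Bs] by (auto simp: Bs_def)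
  obtain c where c0: "c \<ge> 0" and c: "H1 I = ennreal c" using fin[of I] by (auto simp: I_def)
  have "ennreal (k * (d - \<eta>)) < ennreal av"
  proof -
    have eq: "k * (d - \<eta>) = (3/4 + \<alpha>) * (2 * (d - \<eta>))" unfolding k_def by argo
    have "ennreal ((3/4 + \<alpha>) * (2 * (d - \<eta>))) < H1 A"
      using assms(8)[OF xF, of "d - \<eta>"] \<eta>d d3 \<eta>0 by (simp add: A_def)
    thus ?thesis using eq av by metis
  qed
  hence kav: "k * (d - \<eta>) < av" by (meson ennreal_leI leD not_less)
  have sep: "\<eta> \<le> dist a b" if "a \<in> A" "b \<in> Bs" for a b
  proof -
    have "dist x a < d - \<eta>" using that by (simp add: A_def)
    moreover have "d \<le> dist x b" using that by (simp add: Bs_def)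
    moreover have "dist x b \<le> dist x a + dist a b" by (rule dist_triangle)
    ultimately show ?thesis by linarith
  qed
  have diam: "diameter (ball x d \<union> ball y d) \<le> 3 * d"
  proof (rule diameter_le)
    show "ball x d \<union> ball y d \<noteq> {} \<or> 0 \<le> 3 * d" using d0 by simp
    fix p q assume p: "p \<in> ball x d \<union> ball y d" and q: "q \<in> ball x d \<union> ball y d"
    have "dist x y = d" by (simp add: d_def)
    hence "dist p q \<le> 3 * d" using p q d0
      by (auto simp: dist_commute) (smt (verit, best) dist_commute dist_triangle)+
    thus "norm (p - q) \<le> 3 * d" by (simp add: dist_norm)
  qed
  have "H1 A + H1 Bs \<le> H1 (A \<union> Bs)" using H1_sep[OF sep \<eta>0] by blast
  also have "\<dots> \<le> H1 (E \<inter> (ball x d \<union> ball y d))"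
    by (rule H1_mono) (use \<eta>0 in \<open>auto simp: A_def Bs_def\<close>)
  also have "\<dots> \<le> ennreal ((1 + \<alpha>) * diameter (ball x d \<union> ball y d))"
    using xF d0 diam d3 by (intro assms(9)) auto
  also have "\<dots> \<le> ennreal ((1 + \<alpha>) * (3 * d))"
    using diam assms(3) by (intro ennreal_leI mult_left_mono) auto
  finally have "ennreal (av + bs) \<le> ennreal ((1 + \<alpha>) * (3 * d))"
    using av bs av0 bs0 by (simp add: ennreal_plus[symmetric] del: ennreal_plus)
  hence ineq1: "av + bs \<le> (1 + \<alpha>) * (3 * d)"
    using d0 assms(3) by (simp add: ennreal_le_iff)
  have "H1 (E \<inter> ball y d) \<le> H1 (Bs \<union> I)"
    by (rule H1_mono) (auto simp: Bs_def I_def)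
  also have "\<dots> \<le> H1 Bs + H1 I" by (rule H1_subadd)
  finally have "ennreal bv \<le> ennreal (bs + c)"
    using bv bs c bs0 c0 by (simp add: ennreal_plus[symmetric] del: ennreal_plus)
  hence ineq2: "bv \<le> bs + c" using bs0 c0 by (simp add: ennreal_le_iff del: ennreal_plus)
  have "\<alpha> * d < c"
  proof -
    have e1: "k * (d - \<eta>) = k*d - k*\<eta>" by (simp add: right_diff_distrib)
    have e2: "k * d = 3/2*d + 2*(\<alpha>*d)" unfolding k_def by argo
    have e3: "(1 + \<alpha>) * (3 * d) = 3*d + 3*(\<alpha>*d)" by argo
    show ?thesis using ineq1 ineq2 kav k\<eta> e1 e2 e3 by linarith
  qed
  hence "ennreal (\<alpha> * d) < ennreal c" using d0 assms(3) by (simp add: ennreal_less_iff)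
  thus "H1 (E \<inter> (ball x (dist x y) \<inter> ball y (dist x y))) > ennreal (\<alpha> * dist x y)"
    using c by (simp add: I_def d_def)
qed

end
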